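(* Let $\ell=2m+1\ge3$, $a\in\mathfrak o_\ell^\times$ with image $\bar a\in\mathfrak o_m$, let $x\in\mathfrak g(\mathfrak o_m)$ be an $\bar a$-regular element and $\tilde x\in\mathfrak g(\mathfrak o_\ell)$ any lift of $x$. Then $\mathbf U(\mathfrak o_\ell)\cap C_{\mathbf G(\mathfrak o_\ell)}(\tilde x)K_\ell^m=\mathbf U(\varpi^m\mathfrak o_\ell)$.
   Context: $\mathfrak o$: ring of integers of a non-archimedean local field, uniformizer $\varpi$, residue field $\mathbb F_q$ of characteristic $p$; $\mathfrak o_r=\mathfrak o/\varpi^r\mathfrak o$. Either $\mathbf G={\rm GL}_n$, $\mathfrak g=M_n$, or $\mathbf G={\rm SL}_n$, $\mathfrak g=\mathfrak{sl}_n$ with $p$ odd, $p\nmid n$. $\mathbf U(\mathfrak o_\ell)$: upper unitriangular matrices in $\mathbf G(\mathfrak o_\ell)$; $\mathbf U(\varpi^k\mathfrak o_\ell)$: those with strictly upper triangular entries in $\varpi^k\mathfrak o_\ell$. $K_\ell^m=\ker(\mathbf G(\mathfrak o_\ell)\to\mathbf G(\mathfrak o_m))$. For $\alpha\in\mathfrak o_m^\times$, an $\alpha$-regular element of $\mathfrak g(\mathfrak o_m)$ is a matrix with $(2,1)$ entry $\alpha$, $(i+1,i)$ entries $1$ for $2\le i\le n-1$, arbitrary last column, other entries $0$. $C_{\mathbf G(\mathfrak o_\ell)}(\tilde x)$ is the centralizer of $\tilde x$ in $\mathbf G(\mathfrak o_\ell)$. *)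

theory Defs
  imports "Jordan_Normal_Form.Determinant"
begin

text \<open>Congruence modulo pi^k in the ring of integers o (elements of o_k are represented
  by elements of o; equality in o_k is congruence modulo pi^k).\<close>
definition cong_pi :: "'a::idom \<Rightarrow> nat \<Rightarrow> 'a \<Rightarrow> 'a \<Rightarrow> bool" where
  "cong_pi \<pi> k a b \<longleftrightarrow> \<pi> ^ k dvd (a - b)"

text \<open>o is the ring of integers of a non-archimedean local field with uniformizer pi and
  residue field of characteristic p: a complete discrete valuation ring with finite
  residue field of characteristic p.\<close>
definition local_field_integers :: "'a::idom \<Rightarrow> nat \<Rightarrow> bool" where
  "local_field_integers \<pi> p \<longleftrightarrow>
     \<pi> \<noteq> 0 \<and> \<not> \<pi> dvd 1 \<and>
     (\<forall>x. x \<noteq> 0 \<longrightarrow> (\<exists>u k. u dvd 1 \<and> x = u * \<pi> ^ k)) \<and>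
     (\<forall>f :: nat \<Rightarrow> 'a. (\<forall>k. cong_pi \<pi> k (f (Suc k)) (f k)) \<longrightarrow>
        (\<exists>L. \<forall>k. cong_pi \<pi> k L (f k))) \<and>
     (\<exists>S. finite S \<and> (\<forall>x. \<exists>s\<in>S. cong_pi \<pi> 1 x s)) \<and>
     prime p \<and> \<pi> dvd of_nat p"

definition mat_cong :: "'a::idom \<Rightarrow> nat \<Rightarrow> 'a mat \<Rightarrow> 'a mat \<Rightarrow> bool" where
  "mat_cong \<pi> k A B \<longleftrightarrow> dim_row A = dim_row B \<and> dim_col A = dim_col B \<and>
     (\<forall>i < dim_row A. \<forall>j < dim_col A. cong_pi \<pi> k (A $$ (i,j)) (B $$ (i,j)))"

definition mat_trace :: "'a::comm_ring_1 mat \<Rightarrow> 'a" where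
  "mat_trace A = (\<Sum>i<dim_row A. A $$ (i,i))"

text \<open>Representatives of G(o_l): G = GL_n if isSL = False, G = SL_n if isSL = True.\<close>
definition G_mem :: "bool \<Rightarrow> 'a::idom \<Rightarrow> nat \<Rightarrow> nat \<Rightarrow> 'a mat \<Rightarrow> bool" where
  "G_mem isSL \<pi> n l g \<longleftrightarrow> g \<in> carrier_mat n n \<and>
     (if isSL then cong_pi \<pi> l (det g) 1 else (\<exists>v. cong_pi \<pi> l (det g * v) 1))"

definition lie_mem :: "bool \<Rightarrow> 'a::idom \<Rightarrow> nat \<Rightarrow> nat \<Rightarrow> 'a mat \<Rightarrow> bool" where
  "lie_mem isSL \<pi> n l X \<longleftrightarrow> X \<in> carrier_mat n n \<and>
     (isSL \<longrightarrow> cong_pi \<pi> l (mat_trace X) 0)"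

text \<open>x in g(o_m) is alpha-regular (0-based indices: entry (1,0) is alpha, entries
  (j+1,j) for 1 <= j <= n-2 are 1, last column arbitrary, all others 0), modulo pi^m.\<close>
definition regular :: "'a::idom \<Rightarrow> nat \<Rightarrow> nat \<Rightarrow> 'a \<Rightarrow> 'a mat \<Rightarrow> bool" where
  "regular \<pi> n m \<alpha> x \<longleftrightarrow> x \<in> carrier_mat n n \<and>
     (\<forall>i<n. \<forall>j<n. j \<noteq> n - 1 \<longrightarrow>
        cong_pi \<pi> m (x $$ (i,j)) (if i = j + 1 then (if j = 0 then \<alpha> else 1) else 0))"

definition U_set :: "bool \<Rightarrow> 'a::idom \<Rightarrow> nat \<Rightarrow> nat \<Rightarrow> 'a mat set" where
  "U_set isSL \<pi> n l = {u. G_mem isSL \<pi> n l u \<and>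
     (\<forall>i<n. \<forall>j<n. (j < i \<longrightarrow> cong_pi \<pi> l (u $$ (i,j)) 0) \<and>
                   (i = j \<longrightarrow> cong_pi \<pi> l (u $$ (i,j)) 1))}"

definition U_pi_set :: "bool \<Rightarrow> 'a::idom \<Rightarrow> nat \<Rightarrow> nat \<Rightarrow> nat \<Rightarrow> 'a mat set" where
  "U_pi_set isSL \<pi> n k l = {u. u \<in> U_set isSL \<pi> n l \<and>
     (\<forall>i<n. \<forall>j<n. i < j \<longrightarrow> cong_pi \<pi> k (u $$ (i,j)) 0)}"

definition centralizer_set :: "bool \<Rightarrow> 'a::idom \<Rightarrow> nat \<Rightarrow> nat \<Rightarrow> 'a mat \<Rightarrow> 'a mat set" where
  "centralizer_set isSL \<pi> n l xt = {c. G_mem isSL \<pi> n l c \<and> mat_cong \<pi> l (c * xt) (xt * c)}"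

definition K_set :: "bool \<Rightarrow> 'a::idom \<Rightarrow> nat \<Rightarrow> nat \<Rightarrow> nat \<Rightarrow> 'a mat set" where
  "K_set isSL \<pi> n l m = {k. G_mem isSL \<pi> n l k \<and> mat_cong \<pi> m k (1\<^sub>m n)}"

text \<open>Product set C K in G(o_l) (as representatives, saturated under congruence mod pi^l).\<close>
definition prod_set :: "'a::idom \<Rightarrow> nat \<Rightarrow> nat \<Rightarrow> 'a mat set \<Rightarrow> 'a mat set \<Rightarrow> 'a mat set" where
  "prod_set \<pi> n l A B = {g. g \<in> carrier_mat n n \<and> (\<exists>a\<in>A. \<exists>b\<in>B. mat_cong \<pi> l g (a * b))}"

end

theory Submission
  imports Defs
begin

lemma cp_refl: "cong_pi \<pi> k a a" by (simp add: cong_pi_def)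
lemma cp_sym: "cong_pi \<pi> k a b \<Longrightarrow> cong_pi \<pi> k b a"
  unfolding cong_pi_def by (metis dvd_minus_iff minus_diff_eq)
lemma cp_trans: "cong_pi \<pi> k a b \<Longrightarrow> cong_pi \<pi> k b c \<Longrightarrow> cong_pi \<pi> k a c"
  unfolding cong_pi_def by (metis diff_add_cancel dvd_add add_diff_eq diff_diff_eq2)
lemma cp_mono: "k \<le> l \<Longrightarrow> cong_pi \<pi> l a b \<Longrightarrow> cong_pi \<pi> k a b"
  unfolding cong_pi_def using power_le_dvd by blast
lemma cp_mult: "cong_pi \<pi> k a a' \<Longrightarrow> cong_pi \<pi> k b b' \<Longrightarrow> cong_pi \<pi> k (a*b) (a'*b')"
proof -
  assume "cong_pi \<pi> k a a'" "cong_pi \<pi> k b b'"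
  then have "\<pi>^k dvd a*(b-b') + (a-a')*b'" unfolding cong_pi_def by simp
  moreover have "a*(b-b') + (a-a')*b' = a*b - a'*b'" by (simp add: algebra_simps)
  ultimately show ?thesis unfolding cong_pi_def by simp
qed
lemma cp_sum: "(\<And>i. i \<in> S \<Longrightarrow> cong_pi \<pi> k (f i) (g i)) \<Longrightarrow> cong_pi \<pi> k (sum f S) (sum g S)"
  unfolding cong_pi_def by (simp add: sum_subtractf[symmetric] dvd_sum)

lemma pi_prime:
  assumes "local_field_integers \<pi> p" "\<pi> dvd x * y"
  shows "\<pi> dvd x \<or> \<pi> dvd y"
proof (cases "x = 0 \<or> y = 0")
  case True then show ?thesis by auto
next
  case False
  from assms(1) have H: "\<forall>x. x \<noteq> 0 \<longrightarrow> (\<exists>u k. u dvd 1 \<and> x = u * \<pi> ^ k)" and nu: "\<not> \<pi> dvd 1"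
    unfolding local_field_integers_def by auto
  from H False obtain u i where u: "u dvd 1" "x = u * \<pi>^i" by blast
  from H False obtain w j where w: "w dvd 1" "y = w * \<pi>^j" by blast
  show ?thesis
  proof (cases "i = 0 \<and> j = 0")
    case True
    then have "x * y = u * w" using u w by simp
    then have "\<pi> dvd 1" using assms(2) u w by (metis dvd_trans unit_prod)
    then show ?thesis using nu by simp
  next
    case False
    then show ?thesis using u w
      by (metis dvd_mult dvd_power gr0I)
  qed
qed

lemma pi_cancel_aux:
  fixes \<pi> :: "'a::idom"
  assumes pr: "\<And>x y. \<pi> dvd x * y \<Longrightarrow> \<pi> dvd x \<or> \<pi> dvd y" and nz: "\<pi> \<noteq> 0"
    and b: "\<not> \<pi> dvd b"
  shows "\<pi>^m dvd b * d \<Longrightarrow> \<pi>^m dvd d"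
proof (induction m arbitrary: d)
  case 0 then show ?case by (simp only: power_0 one_dvd)
next
  case (Suc m)
  then have "\<pi> dvd b * d" by (metis dvd_mult_left power_Suc)
  then have "\<pi> dvd d" using pr b by blast
  then obtain e where e: "d = \<pi> * e" by blast
  have "\<pi> * \<pi>^m dvd \<pi> * (b * e)" using Suc.prems e by (simp add: ac_simps)
  then have "\<pi>^m dvd b * e" using nz by simp
  then have "\<pi>^m dvd e" using Suc.IH by blast
  then show ?case using e by simp
qed

lemma cp_cancel:
  assumes "local_field_integers \<pi> p" "\<not> \<pi> dvd c" "cong_pi \<pi> m (c*x) (c*y)"
  shows "cong_pi \<pi> m x y"
proof -
  have nz: "\<pi> \<noteq> 0" using assms(1) unfolding local_field_integers_def by simp
  have "\<pi>^m dvd c * (x - y)" using assms(3) unfolding cong_pi_def by (simp add: algebra_simps)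
  then show ?thesis unfolding cong_pi_def
    using pi_cancel_aux[of \<pi> c m "x-y"] pi_prime[OF assms(1)] nz assms(2) by blast
qed

lemma mult_entry:
  assumes "A \<in> carrier_mat n n" "B \<in> carrier_mat n n" "i < n" "j < n"
  shows "(A*B)$$(i,j) = (\<Sum>r<n. A$$(i,r) * B$$(r,j))"
  using assms by (simp add: scalar_prod_def lessThan_atLeast0)

lemma mc_mono: "k \<le> l \<Longrightarrow> mat_cong \<pi> l A B \<Longrightarrow> mat_cong \<pi> k A B"
  unfolding mat_cong_def using cp_mono by blast
lemma mc_sym: "mat_cong \<pi> k A B \<Longrightarrow> mat_cong \<pi> k B A"
  unfolding mat_cong_def using cp_sym by metis
lemma mc_trans: "mat_cong \<pi> k A B \<Longrightarrow> mat_cong \<pi> k B C \<Longrightarrow> mat_cong \<pi> k A C"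
  unfolding mat_cong_def using cp_trans by fastforce
lemma mc_refl: "mat_cong \<pi> k A A"
  unfolding mat_cong_def using cp_refl by auto

lemma mc_mult:
  assumes "A \<in> carrier_mat n n" "A' \<in> carrier_mat n n" "B \<in> carrier_mat n n" "B' \<in> carrier_mat n n"
    "mat_cong \<pi> k A A'" "mat_cong \<pi> k B B'"
  shows "mat_cong \<pi> k (A*B) (A'*B')"
  unfolding mat_cong_def
proof (intro conjI allI impI)
  fix i j assume ij: "i < dim_row (A*B)" "j < dim_col (A*B)"
  then have i: "i < n" and j: "j < n" using assms by auto
  show "cong_pi \<pi> k ((A*B)$$(i,j)) ((A'*B')$$(i,j))"
    unfolding mult_entry[OF assms(1,3) i j] mult_entry[OF assms(2,4) i j]
    apply (rule cp_sum)
    apply (rule cp_mult)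
    using assms i j unfolding mat_cong_def by auto
qed (use assms in auto)


lemma cols_identity:
  fixes \<pi> :: "'a::idom"
  assumes o: "local_field_integers \<pi> p" and a: "\<not> \<pi> dvd a"
    and u: "u \<in> carrier_mat n n" and x: "regular \<pi> n m a x"
    and comm: "mat_cong \<pi> m (u*x) (x*u)"
    and c0: "\<And>i. i < n \<Longrightarrow> cong_pi \<pi> m (u$$(i,0)) (if i = 0 then 1 else 0)"
  shows "j < n \<Longrightarrow> \<forall>i<n. cong_pi \<pi> m (u$$(i,j)) (if i = j then 1 else 0)"
proof (induction j)
  case 0 then show ?case using c0 by auto
next
  case (Suc j)
  have xc: "x \<in> carrier_mat n n" and xr: "\<And>i k. i<n \<Longrightarrow> k<n \<Longrightarrow> k \<noteq> n - 1 \<Longrightarrow>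
        cong_pi \<pi> m (x $$ (i,k)) (if i = k + 1 then (if k = 0 then a else 1) else 0)"
    using x unfolding regular_def by auto
  define cf where "cf = (if j = 0 then a else 1)"
  have cfu: "\<not> \<pi> dvd cf" using a o unfolding cf_def local_field_integers_def by auto
  have j: "j < n" "j \<noteq> n - 1" using Suc.prems by auto
  have IH: "\<forall>i<n. cong_pi \<pi> m (u$$(i,j)) (if i = j then 1 else 0)" using Suc.IH j by auto
  show ?case
  proof (intro allI impI)
    fix i assume i: "i < n"
    have "cong_pi \<pi> m ((u*x)$$(i,j)) ((x*u)$$(i,j))"
      using comm i j xc u unfolding mat_cong_def by auto
    moreover have "cong_pi \<pi> m ((u*x)$$(i,j)) (\<Sum>r<n. if r = Suc j then u$$(i,r) * cf else 0)"
      unfolding mult_entry[OF u xc i j(1)]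
    proof (rule cp_sum)
      fix r assume r: "r \<in> {..<n}"
      show "cong_pi \<pi> m (u $$ (i, r) * x $$ (r, j)) (if r = Suc j then u $$ (i, r) * cf else 0)"
      proof -
        have r': "r < n" using r by simp
        have "cong_pi \<pi> m (x$$(r,j)) (if r = Suc j then cf else 0)"
          using xr[OF r' j(1) j(2)] unfolding cf_def by (auto split: if_splits)
        then have "cong_pi \<pi> m (u$$(i,r) * x$$(r,j)) (u$$(i,r) * (if r = Suc j then cf else 0))"
          by (rule cp_mult[OF cp_refl])
        then show ?thesis by (cases "r = Suc j") auto
      qed
    qed
    moreover have "(\<Sum>r<n. if r = Suc j then u$$(i,r) * cf else 0) = u$$(i, Suc j) * cf"
      using Suc.prems by simp
    moreover have "cong_pi \<pi> m ((x*u)$$(i,j)) (\<Sum>r<n. if r = j then x$$(i,r) else 0)"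
      unfolding mult_entry[OF xc u i j(1)]
    proof (rule cp_sum)
      fix r assume r: "r \<in> {..<n}"
      show "cong_pi \<pi> m (x $$ (i, r) * u $$ (r, j)) (if r = j then x $$ (i, r) else 0)"
      proof -
        have r': "r < n" using r by simp
        have "cong_pi \<pi> m (u$$(r,j)) (if r = j then 1 else 0)" using IH r' by blast
        then have "cong_pi \<pi> m (x$$(i,r) * u$$(r,j)) (x$$(i,r) * (if r = j then 1 else 0))"
          by (rule cp_mult[OF cp_refl])
        then show ?thesis by (cases "r = j") auto
      qed
    qed
    moreover have "(\<Sum>r<n. if r = j then x$$(i,r) else 0) = x$$(i,j)" using j by simp
    moreover have "cong_pi \<pi> m (x$$(i,j)) (cf * (if i = Suc j then 1 else 0))"
      using xr[OF i j(1) j(2)] unfolding cf_def by auto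
    ultimately have "cong_pi \<pi> m (u$$(i, Suc j) * cf) (cf * (if i = Suc j then 1 else 0))"
      using cp_sym cp_trans by metis
    then have "cong_pi \<pi> m (cf * u$$(i, Suc j)) (cf * (if i = Suc j then 1 else 0))"
      by (simp add: mult.commute)
    then show "cong_pi \<pi> m (u$$(i, Suc j)) (if i = Suc j then 1 else 0)"
      using cp_cancel[OF o cfu] by blast
  qed
qed

theorem lemma4p5:
  fixes \<pi> :: "'a::idom" and p n m l :: nat and isSL :: bool
    and a :: 'a and x xt :: "'a mat"
  assumes o_local: "local_field_integers \<pi> p"
    and n_pos: "n \<ge> 1"
    and SL_cond: "isSL \<longrightarrow> odd p \<and> \<not> p dvd n"
    and l_def: "l = 2 * m + 1" and l_ge: "l \<ge> 3"
    and a_unit: "\<not> \<pi> dvd a"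
    and x_lie: "lie_mem isSL \<pi> n m x"
    and x_reg: "regular \<pi> n m a x"
    and xt_lie: "lie_mem isSL \<pi> n l xt"
    and xt_lift: "mat_cong \<pi> m xt x"
  shows "U_set isSL \<pi> n l \<inter> prod_set \<pi> n l (centralizer_set isSL \<pi> n l xt) (K_set isSL \<pi> n l m)
           = U_pi_set isSL \<pi> n m l"
proof
  have ml: "m \<le> l" using l_def by simp
  have xc: "x \<in> carrier_mat n n" using x_reg unfolding regular_def by auto
  have xtc: "xt \<in> carrier_mat n n" using xt_lie unfolding lie_mem_def by auto
  show "U_set isSL \<pi> n l \<inter> prod_set \<pi> n l (centralizer_set isSL \<pi> n l xt) (K_set isSL \<pi> n l m)
           \<subseteq> U_pi_set isSL \<pi> n m l"
  proof
    fix u assume uU: "u \<in> U_set isSL \<pi> n l \<inter> prod_set \<pi> n l (centralizer_set isSL \<pi> n l xt) (K_set isSL \<pi> n l m)"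
    then have uc: "u \<in> carrier_mat n n" unfolding prod_set_def by auto
    from uU obtain c k where c: "c \<in> centralizer_set isSL \<pi> n l xt" and k: "k \<in> K_set isSL \<pi> n l m"
      and uck: "mat_cong \<pi> l u (c*k)" unfolding prod_set_def by auto
    have cc: "c \<in> carrier_mat n n" and cx: "mat_cong \<pi> l (c*xt) (xt*c)"
      using c unfolding centralizer_set_def G_mem_def by auto
    have kc: "k \<in> carrier_mat n n" and k1: "mat_cong \<pi> m k (1\<^sub>m n)"
      using k unfolding K_set_def G_mem_def by auto
    have "mat_cong \<pi> m (c*k) (c*1\<^sub>m n)"
      by (rule mc_mult[OF cc cc kc one_carrier_mat mc_refl k1])
    then have "mat_cong \<pi> m (c*k) c" using cc by simp
    then have uc_c: "mat_cong \<pi> m u c" using mc_mono[OF ml uck] mc_trans by blast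
    have "mat_cong \<pi> m (u*x) (c*xt)"
      by (rule mc_mult[OF uc cc xc xtc uc_c mc_sym[OF xt_lift]])
    moreover have "mat_cong \<pi> m (c*xt) (xt*c)" using mc_mono[OF ml cx] .
    moreover have "mat_cong \<pi> m (xt*c) (x*u)"
      by (rule mc_mult[OF xtc xc cc uc xt_lift mc_sym[OF uc_c]])
    ultimately have comm: "mat_cong \<pi> m (u*x) (x*u)" using mc_trans by blast
    have uprops: "\<And>i j. i<n \<Longrightarrow> j<n \<Longrightarrow> (j < i \<longrightarrow> cong_pi \<pi> l (u $$ (i,j)) 0) \<and>
                   (i = j \<longrightarrow> cong_pi \<pi> l (u $$ (i,j)) 1)"
      using uU unfolding U_set_def by blast
    have c0: "\<And>i. i < n \<Longrightarrow> cong_pi \<pi> m (u$$(i,0)) (if i = 0 then 1 else 0)"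
    proof -
      fix i assume i: "i < n"
      have n0: "0 < n" using i by simp
      show "cong_pi \<pi> m (u$$(i,0)) (if i = 0 then 1 else 0)"
      proof (cases "i = 0")
        case True then show ?thesis using uprops[OF i n0] cp_mono[OF ml] by simp
      next
        case False then show ?thesis using uprops[OF i n0] cp_mono[OF ml] by simp
      qed
    qed
    have cols: "\<And>j. j < n \<Longrightarrow> \<forall>i<n. cong_pi \<pi> m (u$$(i,j)) (if i = j then 1 else 0)"
      using cols_identity[OF o_local a_unit uc x_reg comm c0] by blast
    show "u \<in> U_pi_set isSL \<pi> n m l"
      unfolding U_pi_set_def using uU cols by fastforce
  qed
  show "U_pi_set isSL \<pi> n m l \<subseteq> U_set isSL \<pi> n l \<inter> prod_set \<pi> n l (centralizer_set isSL \<pi> n l xt) (K_set isSL \<pi> n l m)"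
  proof
    fix u assume u: "u \<in> U_pi_set isSL \<pi> n m l"
    then have uU: "u \<in> U_set isSL \<pi> n l" and up: "\<And>i j. i<n \<Longrightarrow> j<n \<Longrightarrow> i < j \<Longrightarrow> cong_pi \<pi> m (u $$ (i,j)) 0"
      unfolding U_pi_set_def by auto
    have uG: "G_mem isSL \<pi> n l u" and uc: "u \<in> carrier_mat n n"
      using uU unfolding U_set_def G_mem_def by auto
    have uprops: "\<And>i j. i<n \<Longrightarrow> j<n \<Longrightarrow> (j < i \<longrightarrow> cong_pi \<pi> l (u $$ (i,j)) 0) \<and>
                   (i = j \<longrightarrow> cong_pi \<pi> l (u $$ (i,j)) 1)"
      using uU unfolding U_set_def by blast
    have "mat_cong \<pi> m u (1\<^sub>m n)" unfolding mat_cong_def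
    proof (intro conjI allI impI)
      fix i j assume "i < dim_row u" "j < dim_col u"
      then have ij: "i < n" "j < n" using uc by auto
      show "cong_pi \<pi> m (u $$ (i, j)) (1\<^sub>m n $$ (i, j))"
      proof (cases "i < j")
        case True then show ?thesis using up ij by simp
      next
        case False then show ?thesis using uprops[OF ij] cp_mono[OF ml] ij
          by (cases "i = j") auto
      qed
    qed (use uc in auto)
    then have uK: "u \<in> K_set isSL \<pi> n l m" using uG unfolding K_set_def by auto
    have one: "1\<^sub>m n \<in> centralizer_set isSL \<pi> n l xt"
      unfolding centralizer_set_def G_mem_def using xtc mc_refl
      by (auto simp: cong_pi_def intro: exI[of _ 1])
    have "u \<in> prod_set \<pi> n l (centralizer_set isSL \<pi> n l xt) (K_set isSL \<pi> n l m)"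
    proof -
      have "mat_cong \<pi> l u (1\<^sub>m n * u)" using uc mc_refl[of \<pi> l u] by simp
      then show ?thesis unfolding prod_set_def using uc one uK by blast
    qed
    then show "u \<in> U_set isSL \<pi> n l \<inter> prod_set \<pi> n l (centralizer_set isSL \<pi> n l xt) (K_set isSL \<pi> n l m)"
      using uU by blast
  qed
qed

end
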